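(* Let $V$ be an irreducible cuspidal $\mathcal G$-module. Then either $t^{\mathbf r}$ acts injectively on $V$ for every $\mathbf r\in\mathbb Z^n\setminus\{\mathbf 0\}$, or $t^{\mathbf r}$ acts locally nilpotently on $V$ for every $\mathbf r\in\mathbb Z^n\setminus\{\mathbf 0\}$.
   Context: $n\ge 3$. $\mathcal A_n=\mathbb C[t_1^{\pm1},\dots,t_n^{\pm1}]$, $t^{\mathbf m}=t_1^{m_1}\cdots t_n^{m_n}$, $d_j=t_j\frac{\partial}{\partial t_j}$, $(\mathbf u|\mathbf v)=\sum_iu_iv_i$, $D(\mathbf u,\mathbf r)=\sum_iu_it^{\mathbf r}d_i$. $\mathcal D_n=\mathrm{span}\{D(\mathbf u,\mathbf r):(\mathbf u|\mathbf r)=0\}$ with $[D(\mathbf p,\mathbf m),D(\mathbf q,\mathbf k)]=D((\mathbf p|\mathbf k)\mathbf q-(\mathbf q|\mathbf m)\mathbf p,\mathbf m+\mathbf k)$; $\mathcal G=\mathcal D_n\ltimes\mathcal A_n$ with $[D(\mathbf u,\mathbf r),t^{\mathbf m}]=(\mathbf u|\mathbf m)t^{\mathbf r+\mathbf m}$, $[t^{\mathbf r},t^{\mathbf m}]=0$. $\mathcal H=\mathrm{span}\{d_j\}$; a cuspidal module is a weight module for $\mathcal H$ whose weight spaces have uniformly bounded finite dimension. *)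

theory Defs
  imports "HOL-Analysis.Analysis"
begin

text \<open>Index set of the torus: a finite type 'n with n = CARD('n).
  Vectors u in C^n are complex^'n, lattice points r in Z^n are int^'n.\<close>

definition pair :: "complex^'n::finite \<Rightarrow> int^'n \<Rightarrow> complex" where
  "pair u m = (\<Sum>i\<in>UNIV. u$i * of_int (m$i))"

text \<open>Pairing of u in C^n with a weight lambda in C^n (= H^*, via d_j -> lambda_j).\<close>
definition cpair :: "complex^'n::finite \<Rightarrow> complex^'n \<Rightarrow> complex" where
  "cpair u l = (\<Sum>i\<in>UNIV. u$i * l$i)"

text \<open>A representation of G = D_n \<ltimes> A_n on the complex vector space ('v, smul):
  dact u r is the action of D(u,r) (meaningful only when (u|r)=0),
  tact m is the action of t^m.  Since the D(u,r) with (u|r)=0, for fixed r,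
  form the subspace r^perp (x) t^r and D_n is the direct sum of these over r,
  and the t^m form a basis of A_n, a linear Lie algebra action is exactly
  the following data.\<close>
definition is_G_module ::
  "(complex \<Rightarrow> 'v::ab_group_add \<Rightarrow> 'v) \<Rightarrow> (complex^'n::finite \<Rightarrow> int^'n \<Rightarrow> 'v \<Rightarrow> 'v)
    \<Rightarrow> (int^'n \<Rightarrow> 'v \<Rightarrow> 'v) \<Rightarrow> bool" where
  "is_G_module smul dact tact \<longleftrightarrow>
     vector_space smul \<and>
     (\<forall>u r. pair u r = 0 \<longrightarrow> Vector_Spaces.linear smul smul (dact u r)) \<and>
     (\<forall>m. Vector_Spaces.linear smul smul (tact m)) \<and>
     (\<forall>a b u w r v. pair u r = 0 \<and> pair w r = 0 \<longrightarrow>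
        dact (\<chi> i. a * u$i + b * w$i) r v = smul a (dact u r v) + smul b (dact w r v)) \<and>
     (\<forall>p m q k v. pair p m = 0 \<and> pair q k = 0 \<longrightarrow>
        dact p m (dact q k v) - dact q k (dact p m v)
          = dact (\<chi> i. pair p k * q$i - pair q m * p$i) (m + k) v) \<and>
     (\<forall>u r m v. pair u r = 0 \<longrightarrow>
        dact u r (tact m v) - tact m (dact u r v) = smul (pair u m) (tact (r + m) v)) \<and>
     (\<forall>r m v. tact r (tact m v) = tact m (tact r v))"

text \<open>Weight space for H = span{d_j} = {D(u,0)}.\<close>
definition weight_space ::
  "(complex \<Rightarrow> 'v::ab_group_add \<Rightarrow> 'v) \<Rightarrow> (complex^'n::finite \<Rightarrow> int^'n \<Rightarrow> 'v \<Rightarrow> 'v)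
    \<Rightarrow> complex^'n \<Rightarrow> 'v set" where
  "weight_space smul dact l = {v. \<forall>u. dact u 0 v = smul (cpair u l) v}"

definition is_cuspidal ::
  "(complex \<Rightarrow> 'v::ab_group_add \<Rightarrow> 'v) \<Rightarrow> (complex^'n::finite \<Rightarrow> int^'n \<Rightarrow> 'v \<Rightarrow> 'v) \<Rightarrow> bool" where
  "is_cuspidal smul dact \<longleftrightarrow>
     module.span smul (\<Union>l. weight_space smul dact l) = UNIV \<and>
     (\<exists>N::nat. \<forall>l S. S \<subseteq> weight_space smul dact l \<and> \<not> module.dependent smul S
                  \<longrightarrow> finite S \<and> card S \<le> N)"

definition is_irreducible ::
  "(complex \<Rightarrow> 'v::ab_group_add \<Rightarrow> 'v) \<Rightarrow> (complex^'n::finite \<Rightarrow> int^'n \<Rightarrow> 'v \<Rightarrow> 'v)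
    \<Rightarrow> (int^'n \<Rightarrow> 'v \<Rightarrow> 'v) \<Rightarrow> bool" where
  "is_irreducible smul dact tact \<longleftrightarrow>
     (\<exists>v::'v. v \<noteq> 0) \<and>
     (\<forall>W. module.subspace smul W \<and>
          (\<forall>u r. pair u r = 0 \<longrightarrow> dact u r ` W \<subseteq> W) \<and>
          (\<forall>m. tact m ` W \<subseteq> W) \<longrightarrow> W = {0} \<or> W = UNIV)"

end

theory Submission imports Defs begin

definition lin :: "(complex \<Rightarrow> 'v::ab_group_add \<Rightarrow> 'v) \<Rightarrow> ('v \<Rightarrow> 'v) \<Rightarrow> bool" where
  "lin sm f \<longleftrightarrow> (\<forall>a b. f (a + b) = f a + f b) \<and> (\<forall>c a. f (sm c a) = sm c (f a))"

definition LN :: "('v::zero \<Rightarrow> 'v) \<Rightarrow> bool" where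
  "LN f \<longleftrightarrow> (\<forall>v. \<exists>k. (f ^^ k) v = 0)"

definition hgt :: "('v::zero \<Rightarrow> 'v) \<Rightarrow> 'v \<Rightarrow> nat" where
  "hgt f v = (LEAST k. (f ^^ k) v = 0)"

lemma pair_add: "pair u (a + b) = pair u a + pair u b"
  by (simp add: pair_def sum.distrib distrib_left)
lemma pair_neg: "pair u (- a) = - pair u a"
  by (simp add: pair_def sum_negf)
lemma pair_diff: "pair u (a - b) = pair u a - pair u b"
  by (simp add: pair_def sum_subtractf right_diff_distrib)
lemma pair_zero: "pair u 0 = 0"
  by (simp add: pair_def)

definition sh :: "complex^'n::finite \<Rightarrow> int^'n \<Rightarrow> complex^'n" where
  "sh l s = l + (\<chi> i. of_int (s$i))"

lemma sh_add: "sh (sh l a) b = sh l (a + b)"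
  by (simp add: sh_def vec_eq_iff)
lemma sh_zero: "sh l 0 = l"
  by (simp add: sh_def vec_eq_iff)
lemma cpair_sh: "cpair u (sh l s) = cpair u l + pair u s"
  by (simp add: cpair_def pair_def sh_def distrib_left sum.distrib)

definition idot :: "int^'n::finite \<Rightarrow> int^'n \<Rightarrow> int" where
  "idot a b = (\<Sum>i\<in>UNIV. a$i * b$i)"

definition gram :: "int^'n::finite \<Rightarrow> int^'n \<Rightarrow> int" where
  "gram a b = idot a a * idot b b - (idot a b)^2"

definition perpv :: "int^'n::finite \<Rightarrow> int^'n \<Rightarrow> complex^'n" where
  "perpv s x = (\<chi> i. of_int (idot s s * x$i - idot x s * s$i))"

lemma idot_add1: "idot (a + b) c = idot a c + idot b c"
  by (simp add: idot_def sum.distrib distrib_right)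
lemma idot_add2: "idot a (b + c) = idot a b + idot a c"
  by (simp add: idot_def sum.distrib distrib_left)
lemma idot_neg1: "idot (- a) c = - idot a c"
  by (simp add: idot_def sum_negf)
lemma idot_neg2: "idot a (- c) = - idot a c"
  by (simp add: idot_def sum_negf)
lemma idot_diff1: "idot (a - b) c = idot a c - idot b c"
  by (simp add: idot_def sum_subtractf left_diff_distrib)
lemma idot_diff2: "idot a (b - c) = idot a b - idot a c"
  by (simp add: idot_def sum_subtractf right_diff_distrib)
lemma idot_comm: "idot a b = idot b a"
  by (simp add: idot_def mult.commute)

lemmas idot_simps = idot_add1 idot_add2 idot_neg1 idot_neg2 idot_diff1 idot_diff2

lemma pair_perpv: "pair (perpv s x) m = of_int (idot s s * idot x m - idot x s * idot s m)"
proof -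
  have "pair (perpv s x) m = (\<Sum>i\<in>UNIV. of_int ((idot s s * x$i - idot x s * s$i) * m$i))"
    unfolding pair_def perpv_def by simp
  also have "\<dots> = of_int (\<Sum>i\<in>UNIV. (idot s s * x$i - idot x s * s$i) * m$i)"
    by simp
  also have "(\<Sum>i\<in>UNIV. (idot s s * x$i - idot x s * s$i) * m$i)
      = idot s s * idot x m - idot x s * idot s m"
    unfolding idot_def[of x m] idot_def[of s m]
    by (simp add: sum_distrib_left sum_subtractf algebra_simps)
  finally show ?thesis .
qed

lemma sep:
  assumes "gram x s \<noteq> 0"
  shows "pair (perpv s x) s = 0" "pair (perpv s x) x \<noteq> 0"
proof -
  show "pair (perpv s x) s = 0" unfolding pair_perpv by (simp add: idot_comm[of s x])
  have "idot s s * idot x x - idot x s * idot s x = gram x s"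
    unfolding gram_def by (simp add: idot_comm[of s x] power2_eq_square)
  then show "pair (perpv s x) x \<noteq> 0" unfolding pair_perpv using assms by simp
qed

lemma gram_sym: "gram a b = gram b a"
  unfolding gram_def by (simp add: idot_comm[of a b])

lemma gram_axis: "gram (axis i 1) x = idot x x - (x$i)^2"
proof -
  have a1: "idot (axis i 1) y = y$i" for y :: "int^'a"
  proof -
    have "(\<Sum>k\<in>UNIV. (axis i 1 :: int^'a)$k * y$k) = (\<Sum>k\<in>UNIV. if k = i then y$k else 0)"
      by (rule sum.cong) (auto simp: axis_def)
    then show ?thesis unfolding idot_def by simp
  qed
  show ?thesis unfolding gram_def using a1[of "axis i 1"] a1[of x]
    by (simp add: axis_def)
qed

lemma gram_axis_pos:
  fixes x :: "int^'n::finite"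
  assumes "x$j \<noteq> 0" "j \<noteq> i"
  shows "gram (axis i 1) x \<noteq> 0"
proof -
  have "(\<Sum>k\<in>{i, j}. x$k * x$k) \<le> (\<Sum>k\<in>UNIV. x$k * x$k)"
    by (rule sum_mono2) auto
  moreover have "(\<Sum>k\<in>{i, j}. x$k * x$k) = x$i * x$i + x$j * x$j" using assms by simp
  moreover have "0 < x$j * x$j" using assms(1) by (simp add: zero_less_mult_iff linorder_neq_iff) blast
  ultimately have "x$i * x$i < idot x x" unfolding idot_def by simp
  then show ?thesis unfolding gram_axis by (simp add: power2_eq_square)
qed

locale gm = vector_space smul
  for smul :: "complex \<Rightarrow> 'v::ab_group_add \<Rightarrow> 'v" +
  fixes dact :: "complex^'n::finite \<Rightarrow> int^'n \<Rightarrow> 'v \<Rightarrow> 'v"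
    and tact :: "int^'n \<Rightarrow> 'v \<Rightarrow> 'v"
  assumes Gm: "is_G_module smul dact tact"
    and Irr: "is_irreducible smul dact tact"
    and Cusp: "is_cuspidal smul dact"
begin

lemma lin_of_linear: "Vector_Spaces.linear smul smul f \<Longrightarrow> lin smul f"
  unfolding lin_def Vector_Spaces.linear_iff by auto

lemma tlin: "lin smul (tact m)"
  using Gm unfolding is_G_module_def by (auto intro: lin_of_linear)
lemma dlin: "pair u r = 0 \<Longrightarrow> lin smul (dact u r)"
  using Gm unfolding is_G_module_def by (auto intro: lin_of_linear)
lemma tcomm: "tact r (tact m v) = tact m (tact r v)"
  using Gm unfolding is_G_module_def by auto
lemma dt: "pair u r = 0 \<Longrightarrow> tact m (dact u r v) = dact u r (tact m v) - smul (pair u m) (tact (r + m) v)"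
proof -
  assume h: "pair u r = 0"
  have e: "dact u r (tact m v) - tact m (dact u r v) = smul (pair u m) (tact (r + m) v)"
    using Gm h unfolding is_G_module_def by blast
  have "tact m (dact u r v) = dact u r (tact m v) - (dact u r (tact m v) - tact m (dact u r v))"
    by simp
  then show ?thesis using e by simp
qed
lemma dd: "pair p m = 0 \<Longrightarrow> pair q k = 0 \<Longrightarrow>
        dact p m (dact q k v) - dact q k (dact p m v)
          = dact (\<chi> i. pair p k * q$i - pair q m * p$i) (m + k) v"
  using Gm unfolding is_G_module_def by auto
lemma dlc: "pair u r = 0 \<Longrightarrow> pair w r = 0 \<Longrightarrow>
        dact (\<chi> i. a * u$i + b * w$i) r v = smul a (dact u r v) + smul b (dact w r v)"
  using Gm unfolding is_G_module_def by auto

lemma lin_add: "lin smul f \<Longrightarrow> f (a + b) = f a + f b" by (simp add: lin_def)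
lemma lin_scale: "lin smul f \<Longrightarrow> f (smul c a) = smul c (f a)" by (simp add: lin_def)
lemma lin_zero: "lin smul f \<Longrightarrow> f 0 = 0"
  using lin_scale[of f 0 0] by simp
lemma lin_neg: "lin smul f \<Longrightarrow> f (- a) = - f a"
  using lin_scale[of f "-1" a] by simp
lemma lin_diff: "lin smul f \<Longrightarrow> f (a - b) = f a - f b"
  using lin_add[of f a "-b"] lin_neg[of f b] by simp
lemma lin_sum: "lin smul f \<Longrightarrow> f (sum g A) = (\<Sum>x\<in>A. f (g x))"
  by (induct A rule: infinite_finite_induct) (simp_all add: lin_zero lin_add)
lemma lin_pow: "lin smul f \<Longrightarrow> lin smul (f ^^ k)"
  by (induct k) (simp_all add: lin_def)
lemma lin_comp: "lin smul f \<Longrightarrow> lin smul g \<Longrightarrow> lin smul (\<lambda>v. f (g v))"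
  by (simp add: lin_def)
lemma lin_plus: "lin smul f \<Longrightarrow> lin smul g \<Longrightarrow> lin smul (\<lambda>v. f v + g v)"
  by (simp add: lin_def scale_right_distrib)
lemma lin_smul: "lin smul f \<Longrightarrow> lin smul (\<lambda>v. smul c (f v))"
  by (simp add: lin_def scale_right_distrib mult.commute)

lemma smul_eq_0: "c \<noteq> 0 \<Longrightarrow> smul c x = 0 \<Longrightarrow> x = 0"
proof -
  assume c: "c \<noteq> 0" and h: "smul c x = 0"
  have "smul (inverse c) (smul c x) = x" using c by simp
  then show "x = 0" using h by simp
qed

lemma inj_lin: "lin smul f \<Longrightarrow> inj f \<longleftrightarrow> (\<forall>x. f x = 0 \<longrightarrow> x = 0)"
proof
  assume "lin smul f" "inj f" then show "\<forall>x. f x = 0 \<longrightarrow> x = 0"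
    using lin_zero[of f] by (metis injD)
next
  assume l: "lin smul f" and h: "\<forall>x. f x = 0 \<longrightarrow> x = 0"
  show "inj f"
  proof (rule injI)
    fix x y assume "f x = f y"
    then have "f (x - y) = 0" using lin_diff[OF l] by simp
    then have "x - y = 0" using h by blast
    then show "x = y" by simp
  qed
qed

lemma pow_comm: "(\<And>v. f (g v) = g (f v)) \<Longrightarrow> (f ^^ k) (g v) = g ((f ^^ k) v)"
  by (induct k) simp_all


lemma iter_formula:
  assumes ly: "lin smul y" and lz: "lin smul z" and lD: "lin smul D"
    and yz: "\<And>v. y (z v) = z (y v)"
    and yD: "\<And>v. y (D v) = D (y v) - z v"
  shows "(y ^^ Suc k) (D v) = D ((y ^^ Suc k) v) - smul (of_nat (Suc k)) (z ((y ^^ k) v))"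
proof (induct k)
  case 0
  then show ?case using yD by simp
next
  case (Suc k)
  have "(y ^^ Suc (Suc k)) (D v) = y ((y ^^ Suc k) (D v))" by simp
  also have "\<dots> = y (D ((y ^^ Suc k) v)) - smul (of_nat (Suc k)) (y (z ((y ^^ k) v)))"
    using Suc by (simp add: lin_diff[OF ly] lin_scale[OF ly])
  also have "\<dots> = D ((y ^^ Suc (Suc k)) v) - z ((y ^^ Suc k) v) - smul (of_nat (Suc k)) (z ((y ^^ Suc k) v))"
    using yD yz by simp
  also have "\<dots> = D ((y ^^ Suc (Suc k)) v) - smul (of_nat (Suc (Suc k))) (z ((y ^^ Suc k) v))"
  proof -
    have "smul (of_nat (Suc (Suc k))) (z ((y ^^ Suc k) v)) = smul (1 + of_nat (Suc k)) (z ((y ^^ Suc k) v))"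
      by (simp only: of_nat_Suc[of "Suc k"])
    also have "\<dots> = z ((y ^^ Suc k) v) + smul (of_nat (Suc k)) (z ((y ^^ Suc k) v))"
      by (simp only: scale_left_distrib scale_one)
    finally show ?thesis by (simp add: algebra_simps)
  qed
  finally show ?case .
qed

lemma dichotomy:
  assumes ly: "lin smul y"
    and yt: "\<And>m v. y (tact m v) = tact m (y v)"
    and br: "\<And>u r. pair u r = 0 \<Longrightarrow> \<exists>z. lin smul z \<and> (\<forall>v. y (z v) = z (y v)) \<and> (\<forall>v. y (dact u r v) = dact u r (y v) - z v)"
  shows "inj y \<or> LN y"
proof -
  define S where "S = {v. \<exists>k. (y ^^ k) v = 0}"
  have lyk: "\<And>k. lin smul (y ^^ k)" using lin_pow[OF ly] .
  have mono: "(y ^^ (k + j)) v = 0" if "(y ^^ k) v = 0" for k j v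
  proof -
    have "(y ^^ (j + k)) v = (y ^^ j) ((y ^^ k) v)" by (simp add: funpow_add)
    then show ?thesis using that lin_zero[OF lyk[of j]] by (simp add: add.commute)
  qed
  have sub: "subspace S"
    unfolding subspace_def S_def
  proof (intro conjI ballI allI)
    show "0 \<in> {v. \<exists>k. (y ^^ k) v = 0}" by (auto intro: exI[of _ 0])
  next
    fix a b assume "a \<in> {v. \<exists>k. (y ^^ k) v = 0}" "b \<in> {v. \<exists>k. (y ^^ k) v = 0}"
    then obtain ka kb where "(y ^^ ka) a = 0" "(y ^^ kb) b = 0" by auto
    then have "(y ^^ (ka + kb)) a = 0" "(y ^^ (kb + ka)) b = 0" using mono by blast+
    then have "(y ^^ (ka + kb)) (a + b) = 0" using lin_add[OF lyk] by (simp add: add.commute)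
    then show "a + b \<in> {v. \<exists>k. (y ^^ k) v = 0}" by blast
  next
    fix c a assume "a \<in> {v. \<exists>k. (y ^^ k) v = 0}"
    then obtain ka where "(y ^^ ka) a = 0" by auto
    then have "(y ^^ ka) (smul c a) = 0" using lin_scale[OF lyk] by simp
    then show "smul c a \<in> {v. \<exists>k. (y ^^ k) v = 0}" by blast
  qed
  have inv_t: "tact m ` S \<subseteq> S" for m
  proof
    fix w assume "w \<in> tact m ` S"
    then obtain v k where w: "w = tact m v" and "(y ^^ k) v = 0" unfolding S_def by auto
    then have "(y ^^ k) w = 0" using pow_comm[of y "tact m" k v] yt lin_zero[OF tlin] by simp
    then show "w \<in> S" unfolding S_def by blast
  qed
  have inv_d: "dact u r ` S \<subseteq> S" if pr: "pair u r = 0" for u r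
  proof
    fix w assume "w \<in> dact u r ` S"
    then obtain v k where w: "w = dact u r v" and vk: "(y ^^ k) v = 0" unfolding S_def by auto
    obtain z where lz: "lin smul z" and yz: "\<forall>v. y (z v) = z (y v)" and yD: "\<forall>v. y (dact u r v) = dact u r (y v) - z v"
      using br[OF pr] by blast
    have "(y ^^ Suc k) (dact u r v) = dact u r ((y ^^ Suc k) v) - smul (of_nat (Suc k)) (z ((y ^^ k) v))"
      by (rule iter_formula[OF ly lz dlin[OF pr]]) (use yz yD in auto)
    also have "\<dots> = 0" using vk mono[of k v 1] lin_zero[OF lz] lin_zero[OF dlin[OF pr]] by simp
    finally show "w \<in> S" unfolding S_def w by blast
  qed
  have "S = {0} \<or> S = UNIV"
    using Irr sub inv_t inv_d unfolding is_irreducible_def by blast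
  then show ?thesis
  proof
    assume S0: "S = {0}"
    have "inj y"
      unfolding inj_lin[OF ly]
    proof (intro allI impI)
      fix x assume "y x = 0"
      then have "x \<in> S" unfolding S_def by (auto intro: exI[of _ 1])
      then show "x = 0" using S0 by simp
    qed
    then show ?thesis ..
  next
    assume "S = UNIV"
    then show ?thesis unfolding LN_def S_def by auto
  qed
qed

lemma hgt_zero_pow: "LN y \<Longrightarrow> (y ^^ hgt y v) v = 0"
  unfolding hgt_def LN_def by (rule LeastI_ex) blast

lemma hgt_least: "(y ^^ k) v = 0 \<Longrightarrow> hgt y v \<le> k"
  unfolding hgt_def by (rule Least_le)

lemma hgt_below: "k < hgt y v \<Longrightarrow> (y ^^ k) v \<noteq> 0"
  unfolding hgt_def by (rule not_less_Least)

lemma hgt_0: "hgt y 0 = 0"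
  using hgt_least[where y=y and k=0 and v=0] by simp

lemma hgt_pos: "v \<noteq> 0 \<Longrightarrow> LN y \<Longrightarrow> 0 < hgt y v"
  using hgt_zero_pow[of y v] by (cases "hgt y v") auto

lemma pow_mono0: "lin smul y \<Longrightarrow> (y ^^ k) v = 0 \<Longrightarrow> k \<le> j \<Longrightarrow> (y ^^ j) v = 0"
proof -
  assume ly: "lin smul y" and h: "(y ^^ k) v = 0" and kj: "k \<le> j"
  have "(y ^^ j) v = (y ^^ (j - k)) ((y ^^ k) v)" using kj
    by (metis funpow_add le_add_diff_inverse2 o_apply)
  then show ?thesis using h lin_zero[OF lin_pow[OF ly]] by simp
qed

lemma hgt_raise:
  assumes ly: "lin smul y" and LNy: "LN y" and lz: "lin smul z" and lD: "lin smul D"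
    and iz: "inj z"
    and yz: "\<And>v. y (z v) = z (y v)"
    and yD: "\<And>v. y (D v) = D (y v) - z v"
    and v0: "v \<noteq> 0"
  shows "hgt y v < hgt y (D v)"
proof -
  obtain k where hk: "hgt y v = Suc k" using hgt_pos[OF v0 LNy] by (cases "hgt y v") auto
  have a: "(y ^^ Suc k) v = 0" using hgt_zero_pow[OF LNy, of v] hk by simp
  have b: "(y ^^ k) v \<noteq> 0" using hgt_below[of k y v] hk by simp
  have "(y ^^ Suc k) (D v) = D ((y ^^ Suc k) v) - smul (of_nat (Suc k)) (z ((y ^^ k) v))"
    by (rule iter_formula[OF ly lz lD yz yD])
  also have "\<dots> = - smul (of_nat (Suc k)) (z ((y ^^ k) v))" using a lin_zero[OF lD] by simp
  finally have e: "(y ^^ Suc k) (D v) = - smul (of_nat (Suc k)) (z ((y ^^ k) v))" .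
  have "z ((y ^^ k) v) \<noteq> 0" using b iz inj_lin[OF lz] by blast
  then have "smul (of_nat (Suc k)) (z ((y ^^ k) v)) \<noteq> 0"
    using smul_eq_0[of "of_nat (Suc k)"] by (metis of_nat_eq_0_iff nat.distinct(1))
  then have "(y ^^ Suc k) (D v) \<noteq> 0" using e by simp
  then have "\<not> hgt y (D v) \<le> Suc k"
    using pow_mono0[OF ly hgt_zero_pow[OF LNy, of "D v"]] by blast
  then show ?thesis using hk by simp
qed

lemma hgt_inj_comm:
  assumes ly: "lin smul y" and lT: "lin smul T" and iT: "inj T" and yT: "\<And>v. y (T v) = T (y v)"
  shows "hgt y (T v) = hgt y v"
proof -
  have "\<And>k. (y ^^ k) (T v) = 0 \<longleftrightarrow> (y ^^ k) v = 0"
  proof -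
    fix k
    have "(y ^^ k) (T v) = T ((y ^^ k) v)" using pow_comm[of y T] yT by blast
    then show "(y ^^ k) (T v) = 0 \<longleftrightarrow> (y ^^ k) v = 0"
      using iT inj_lin[OF lT] lin_zero[OF lT] by auto
  qed
  then show ?thesis unfolding hgt_def by simp
qed


lemma wsub: "subspace (weight_space smul dact l)"
proof -
  have l0: "\<And>u. lin smul (dact u 0)" using dlin pair_zero by blast
  show ?thesis unfolding subspace_def weight_space_def
    using lin_zero[OF l0] lin_add[OF l0] lin_scale[OF l0]
    by (auto simp: scale_right_distrib scale_left_commute)
qed

lemma wD:
  assumes pr: "pair u s = 0" and v: "v \<in> weight_space smul dact l"
  shows "dact u s v \<in> weight_space smul dact (sh l s)"
  unfolding weight_space_def
proof (intro CollectI allI)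
  fix u' :: "complex^'n"
  have p0: "pair u' 0 = 0" "pair u 0 = 0" by (simp_all add: pair_zero)
  have "dact u' 0 (dact u s v) - dact u s (dact u' 0 v)
      = dact (\<chi> i. pair u' s * u$i - pair u 0 * u'$i) (0 + s) v"
    by (rule dd[OF p0(1) pr])
  also have "(\<chi> i. pair u' s * u$i - pair u 0 * u'$i) = (\<chi> i. pair u' s * u$i + 0 * u$i)"
    by (simp add: pair_zero)
  also have "dact (\<chi> i. pair u' s * u$i + 0 * u$i) (0 + s) v = smul (pair u' s) (dact u s v)"
    using dlc[OF pr pr, of "pair u' s" 0 v] by simp
  finally have e: "dact u' 0 (dact u s v) = dact u s (dact u' 0 v) + smul (pair u' s) (dact u s v)"
    by (simp add: algebra_simps)
  have "dact u s (dact u' 0 v) = smul (cpair u' l) (dact u s v)"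
    using v lin_scale[OF dlin[OF pr]] unfolding weight_space_def by simp
  then show "dact u' 0 (dact u s v) = smul (cpair u' (sh l s)) (dact u s v)"
    using e by (simp add: cpair_sh scale_left_distrib)
qed

lemma wT:
  assumes v: "v \<in> weight_space smul dact l"
  shows "tact p v \<in> weight_space smul dact (sh l p)"
  unfolding weight_space_def
proof (intro CollectI allI)
  fix u' :: "complex^'n"
  have "tact p (dact u' 0 v) = dact u' 0 (tact p v) - smul (pair u' p) (tact (0 + p) v)"
    by (rule dt) (simp add: pair_zero)
  then have e: "dact u' 0 (tact p v) = tact p (dact u' 0 v) + smul (pair u' p) (tact p v)"
    by (simp add: algebra_simps)
  have "tact p (dact u' 0 v) = smul (cpair u' l) (tact p v)"
    using v lin_scale[OF tlin] unfolding weight_space_def by simp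
  then show "dact u' 0 (tact p v) = smul (cpair u' (sh l p)) (tact p v)"
    using e by (simp add: cpair_sh scale_left_distrib)
qed

lemma exists_wv: "\<exists>l v. v \<in> weight_space smul dact l \<and> v \<noteq> 0"
proof (rule ccontr)
  assume "\<not> ?thesis"
  then have "(\<Union>l. weight_space smul dact l) \<subseteq> {0}" by auto
  then have "span (\<Union>l. weight_space smul dact l) \<subseteq> {0}"
    by (rule span_minimal) simp
  then have "UNIV \<subseteq> {0::'v}" using Cusp unfolding is_cuspidal_def by simp
  moreover obtain v :: 'v where "v \<noteq> 0" using Irr unfolding is_irreducible_def by blast
  ultimately show False by blast
qed

lemma cusp_bound: "\<exists>N. \<forall>l S. S \<subseteq> weight_space smul dact l \<and> independent S \<longrightarrow> finite S \<and> card S \<le> N"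
  using Cusp unfolding is_cuspidal_def by blast

lemma core:
  assumes ly: "lin smul y" and LNy: "LN y" and w0: "w 0 \<noteq> 0"
    and wW: "\<And>j. w j \<in> weight_space smul dact l"
    and inc: "\<And>j. hgt y (w j) < hgt y (w (Suc j))"
  shows False
proof -
  obtain N where bound: "\<forall>l S. S \<subseteq> weight_space smul dact l \<and> independent S \<longrightarrow> finite S \<and> card S \<le> N"
    using cusp_bound by blast
  have sm: "strict_mono (\<lambda>j. hgt y (w j))" unfolding strict_mono_Suc_iff using inc by blast
  have heq: "hgt y (w i) = hgt y (w j) \<longleftrightarrow> i = j" for i j
    using strict_mono_eq[OF sm] by simp
  have injw: "inj w" by (rule injI) (metis heq)
  have wnz: "w j \<noteq> 0" for j
  proof -
    have "hgt y (w 0) \<le> hgt y (w j)" using sm unfolding strict_mono_def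
      by (cases "j = 0") (auto intro: less_imp_le)
    moreover have "0 < hgt y (w 0)" using hgt_pos[OF w0 LNy] .
    ultimately show ?thesis using hgt_0[of y] by auto
  qed
  define S where "S = w ` {..N}"
  have Ssub: "S \<subseteq> weight_space smul dact l" unfolding S_def using wW by blast
  have cardS: "card S = Suc N" unfolding S_def
    by (subst card_image) (auto intro: inj_on_subset[OF injw])
  have indep: "independent S"
    unfolding dependent_explicit
  proof
    assume "\<exists>t c. finite t \<and> t \<subseteq> S \<and> (\<Sum>v\<in>t. smul (c v) v) = 0 \<and> (\<exists>v\<in>t. c v \<noteq> 0)"
    then obtain t c v1 where ft: "finite t" and tS: "t \<subseteq> S" and sum0: "(\<Sum>v\<in>t. smul (c v) v) = 0"
      and v1: "v1 \<in> t" "c v1 \<noteq> 0" by blast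
    define T' where "T' = {v \<in> t. c v \<noteq> 0}"
    have fT': "finite T'" using ft unfolding T'_def by simp
    have neT': "T' \<noteq> {}" using v1 unfolding T'_def by blast
    define H where "H = Max (hgt y ` T')"
    have "H \<in> hgt y ` T'" unfolding H_def using fT' neT' by (intro Max_in) auto
    then obtain vs where vsT: "vs \<in> T'" and hvs: "hgt y vs = H" by auto
    have Hmax: "\<And>v. v \<in> T' \<Longrightarrow> hgt y v \<le> H" unfolding H_def using fT' by simp
    have vsS: "vs \<in> S" using vsT tS unfolding T'_def by blast
    have vsnz: "vs \<noteq> 0" using vsS wnz unfolding S_def by auto
    have Hpos: "0 < H" using hgt_pos[OF vsnz LNy] hvs by simp
    define Y where "Y = y ^^ (H - 1)"
    have lY: "lin smul Y" unfolding Y_def by (rule lin_pow[OF ly])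
    have others: "smul (c v) (Y v) = 0" if vt: "v \<in> t - {vs}" for v
    proof (cases "c v = 0")
      case True then show ?thesis by simp
    next
      case False
      then have vT: "v \<in> T'" using vt unfolding T'_def by blast
      have "v \<in> S" using vt tS by blast
      then obtain i where vi: "v = w i" unfolding S_def by blast
      obtain j where vj: "vs = w j" using vsS unfolding S_def by blast
      have "i \<noteq> j" using vt vi vj by blast
      then have "hgt y v \<noteq> H" using heq vi vj hvs by metis
      then have "hgt y v \<le> H - 1" using Hmax[OF vT] by simp
      then have "Y v = 0" unfolding Y_def using pow_mono0[OF ly hgt_zero_pow[OF LNy]] by blast
      then show ?thesis by simp
    qed
    have "0 = Y (\<Sum>v\<in>t. smul (c v) v)" using sum0 lin_zero[OF lY] by simp
    also have "\<dots> = (\<Sum>v\<in>t. smul (c v) (Y v))" by (simp only: lin_sum[OF lY] lin_scale[OF lY])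
    also have "\<dots> = smul (c vs) (Y vs) + (\<Sum>v\<in>t - {vs}. smul (c v) (Y v))"
      using ft vsT unfolding T'_def by (metis (no_types, lifting) mem_Collect_eq sum.remove)
    also have "(\<Sum>v\<in>t - {vs}. smul (c v) (Y v)) = 0" by (rule sum.neutral) (use others in blast)
    also have "smul (c vs) (Y vs) + 0 = smul (c vs) (Y vs)" by simp
    finally have "smul (c vs) (Y vs) = 0" by simp
    moreover have "Y vs \<noteq> 0" unfolding Y_def using hgt_below[of "H - 1" y vs] hvs Hpos by simp
    moreover have "c vs \<noteq> 0" using vsT unfolding T'_def by blast
    ultimately show False using smul_eq_0 by blast
  qed
  have "card S \<le> N" using bound Ssub indep by blast
  then show False using cardS by simp
qed

lemma core2:
  assumes ly: "lin smul y" and LNy: "LN y"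
    and v0: "v0 \<in> weight_space smul dact l" "v0 \<noteq> 0"
    and QW: "\<And>w. w \<in> weight_space smul dact l \<Longrightarrow> Q w \<in> weight_space smul dact l"
    and Qh: "\<And>w. w \<in> weight_space smul dact l \<Longrightarrow> w \<noteq> 0 \<Longrightarrow> hgt y w < hgt y (Q w)"
  shows False
proof -
  define w where "w j = (Q ^^ j) v0" for j
  have P: "w j \<in> weight_space smul dact l \<and> w j \<noteq> 0" for j
  proof (induct j)
    case 0 then show ?case using v0 unfolding w_def by simp
  next
    case (Suc j)
    have ws: "w (Suc j) = Q (w j)" unfolding w_def by simp
    have "hgt y (w j) < hgt y (w (Suc j))" using Qh Suc ws by simp
    then have "w (Suc j) \<noteq> 0" using hgt_0[of y] by auto
    then show ?case using QW Suc ws by simp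
  qed
  show False
  proof (rule core[OF ly LNy, of w l])
    show "w 0 \<noteq> 0" using P by blast
    show "\<And>j. w j \<in> weight_space smul dact l" using P by blast
    show "\<And>j. hgt y (w j) < hgt y (w (Suc j))"
      using Qh P unfolding w_def by simp
  qed
qed

lemma maxws: "\<exists>l S. S \<subseteq> weight_space smul dact l \<and> independent S \<and> S \<noteq> {} \<and> finite S \<and>
    (\<forall>l' S'. S' \<subseteq> weight_space smul dact l' \<and> independent S' \<longrightarrow> card S' \<le> card S)"
proof -
  obtain N where bound: "\<forall>l S. S \<subseteq> weight_space smul dact l \<and> independent S \<longrightarrow> finite S \<and> card S \<le> N"
    using cusp_bound by blast
  define C where "C = {card S | S l. S \<subseteq> weight_space smul dact l \<and> independent S}"
  have CN: "C \<subseteq> {..N}" unfolding C_def using bound by auto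
  then have fC: "finite C" using finite_subset by blast
  obtain l0 v0 where v0: "v0 \<in> weight_space smul dact l0" "v0 \<noteq> (0::'v)" using exists_wv by blast
  have ind1: "independent {v0}" using independent_insertI[of v0 "{}"] v0 by simp
  have "1 \<in> C" unfolding C_def using v0 ind1 by (intro CollectI exI[of _ "{v0}"]) auto
  define M where "M = Max C"
  have "M \<in> C" unfolding M_def using fC \<open>1 \<in> C\<close> by (intro Max_in) auto
  then obtain S l where S: "S \<subseteq> weight_space smul dact l" "independent S" "card S = M"
    unfolding C_def by blast
  have "1 \<le> M" unfolding M_def using fC \<open>1 \<in> C\<close> by simp
  then have "S \<noteq> {}" using S by auto
  moreover have "finite S" using bound S by blast
  moreover have "\<forall>l' S'. S' \<subseteq> weight_space smul dact l' \<and> independent S' \<longrightarrow> card S' \<le> card S"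
    using S fC unfolding M_def C_def by (auto intro!: Max_ge)
  ultimately show ?thesis using S by blast
qed

lemma surj_max:
  assumes S: "S \<subseteq> weight_space smul dact l" "independent S" "finite S"
    and mx: "\<forall>l' S'. S' \<subseteq> weight_space smul dact l' \<and> independent S' \<longrightarrow> card S' \<le> card S"
    and lT: "lin smul T" and iT: "inj T"
    and TW: "\<And>v. v \<in> weight_space smul dact l \<Longrightarrow> T v \<in> weight_space smul dact l'"
  shows "weight_space smul dact l' \<subseteq> T ` weight_space smul dact l"
proof
  fix w assume w: "w \<in> weight_space smul dact l'"
  have mh: "module_hom smul smul T"
    unfolding module_hom_def module_hom_axioms_def
    using lT module_axioms unfolding lin_def by blast
  interpret T: module_hom smul smul T by (rule mh)
  have iTS: "independent (T ` S)"
    by (rule T.independent_injective_image[OF S(2)]) (rule inj_on_subset[OF iT], simp)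
  have TS: "T ` S \<subseteq> weight_space smul dact l'" using S TW by blast
  have cTS: "card (T ` S) = card S" using iT by (simp add: card_image inj_on_subset)
  have "w \<in> span (T ` S)"
  proof (rule ccontr)
    assume nw: "w \<notin> span (T ` S)"
    then have "independent (insert w (T ` S))" using independent_insertI iTS by blast
    moreover have "insert w (T ` S) \<subseteq> weight_space smul dact l'" using TS w by blast
    ultimately have "card (insert w (T ` S)) \<le> card S" using mx by blast
    moreover have "w \<notin> T ` S" using nw span_superset by blast
    ultimately show False using cTS S(3) by simp
  qed
  also have "span (T ` S) = T ` span S" by (rule T.span_image)
  also have "\<dots> \<subseteq> T ` weight_space smul dact l"
    using span_minimal[OF S(1) wsub] by blast
  finally show "w \<in> T ` weight_space smul dact l" .
qed


lemma inj_LN: "lin smul f \<Longrightarrow> inj f \<Longrightarrow> LN f \<Longrightarrow> False"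
proof -
  assume lf: "lin smul f" and i: "inj f" and n: "LN f"
  obtain v :: 'v where v: "v \<noteq> 0" using Irr unfolding is_irreducible_def by blast
  obtain k where "(f ^^ k) v = 0" using n unfolding LN_def by blast
  moreover have "inj (f ^^ k)" using i by simp
  ultimately have "v = 0" using inj_lin[OF lin_pow[OF lf]] by blast
  then show False using v by simp
qed

lemma tact_dich: "inj (tact a) \<or> LN (tact a)"
proof (rule dichotomy[OF tlin])
  show "\<And>m v. tact a (tact m v) = tact m (tact a v)" by (rule tcomm)
  fix u :: "complex^'n" and r assume pr: "pair u r = 0"
  show "\<exists>z. lin smul z \<and> (\<forall>v. tact a (z v) = z (tact a v)) \<and> (\<forall>v. tact a (dact u r v) = dact u r (tact a v) - z v)"
  proof (intro exI conjI allI)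
    show "lin smul (\<lambda>v. smul (pair u a) (tact (r + a) v))" by (rule lin_smul[OF tlin])
    fix v
    show "tact a (smul (pair u a) (tact (r + a) v)) = smul (pair u a) (tact (r + a) (tact a v))"
      using lin_scale[OF tlin] tcomm by simp
    show "tact a (dact u r v) = dact u r (tact a v) - smul (pair u a) (tact (r + a) v)"
      by (rule dt[OF pr])
  qed
qed

definition tt :: "int^'n \<Rightarrow> int^'n \<Rightarrow> 'v \<Rightarrow> 'v" where
  "tt a b = (\<lambda>v. tact a v + tact b v)"

lemma tt_lin: "lin smul (tt a b)"
  unfolding tt_def by (rule lin_plus[OF tlin tlin])

lemma tt_comm: "tt a b (tact m v) = tact m (tt a b v)"
  unfolding tt_def using tcomm lin_add[OF tlin] by simp

lemma tt_dich: "inj (tt a b) \<or> LN (tt a b)"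
proof (rule dichotomy[OF tt_lin])
  show "\<And>m v. tt a b (tact m v) = tact m (tt a b v)" by (rule tt_comm)
  fix u :: "complex^'n" and r assume pr: "pair u r = 0"
  define z where "z = (\<lambda>v. smul (pair u a) (tact (r + a) v) + smul (pair u b) (tact (r + b) v))"
  show "\<exists>z. lin smul z \<and> (\<forall>v. tt a b (z v) = z (tt a b v)) \<and> (\<forall>v. tt a b (dact u r v) = dact u r (tt a b v) - z v)"
  proof (intro exI conjI allI)
    show "lin smul z" unfolding z_def by (intro lin_plus lin_smul tlin)
    fix v
    show "tt a b (z v) = z (tt a b v)"
      unfolding z_def tt_def using lin_add[OF tlin] lin_scale[OF tlin] tcomm
      by (simp add: algebra_simps scale_right_distrib)
    show "tt a b (dact u r v) = dact u r (tt a b v) - z v"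
      unfolding z_def tt_def using dt[OF pr] lin_add[OF dlin[OF pr]] by (simp add: algebra_simps)
  qed
qed

lemma ln_top: "LN A \<Longrightarrow> v \<noteq> 0 \<Longrightarrow> \<exists>k. (A ^^ k) v \<noteq> 0 \<and> A ((A ^^ k) v) = 0"
proof -
  assume n: "LN A" and v: "v \<noteq> 0"
  obtain k where hk: "hgt A v = Suc k" using hgt_pos[OF v n] by (cases "hgt A v") auto
  have "(A ^^ Suc k) v = 0" using hgt_zero_pow[OF n, of v] hk by simp
  moreover have "(A ^^ k) v \<noteq> 0" using hgt_below[of k A v] hk by simp
  ultimately show ?thesis by auto
qed

lemma common_kernel:
  assumes lA: "lin smul A" and lB: "lin smul B" and nA: "LN A" and nB: "LN B"
    and AB: "\<And>v. A (B v) = B (A v)"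
  shows "\<exists>v. v \<noteq> 0 \<and> A v = 0 \<and> B v = 0"
proof -
  obtain v :: 'v where v: "v \<noteq> 0" using Irr unfolding is_irreducible_def by blast
  obtain k where k: "(A ^^ k) v \<noteq> 0" "A ((A ^^ k) v) = 0" using ln_top[OF nA v] by blast
  define w where "w = (A ^^ k) v"
  obtain j where j: "(B ^^ j) w \<noteq> 0" "B ((B ^^ j) w) = 0" using ln_top[OF nB] k unfolding w_def by blast
  have "A ((B ^^ j) w) = (B ^^ j) (A w)" using pow_comm[of B A j w] AB by simp
  also have "\<dots> = 0" using k lin_zero[OF lin_pow[OF lB]] unfolding w_def by simp
  finally show ?thesis using j by blast
qed

lemma J: assumes "inj (tact a)" "LN (tact b)" shows "inj (tt a b)"
proof -
  { assume n: "LN (tt a b)"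
    obtain v where v: "v \<noteq> 0" "tt a b v = 0" "tact b v = 0"
      using common_kernel[OF tt_lin tlin n assms(2)] tt_comm by metis
    then have "tact a v = 0" unfolding tt_def by simp
    then have "v = 0" using assms(1) inj_lin[OF tlin] by blast
    with v have False by simp }
  then show ?thesis using tt_dich by blast
qed

lemma K: assumes "LN (tact a)" "LN (tact b)" shows "LN (tt a b)"
proof -
  { assume i: "inj (tt a b)"
    obtain v where v: "v \<noteq> 0" "tact a v = 0" "tact b v = 0"
      using common_kernel[OF tlin tlin assms] tcomm by metis
    then have "tt a b v = 0" unfolding tt_def by simp
    then have "v = 0" using i inj_lin[OF tt_lin] by blast
    with v have False by simp }
  then show ?thesis using tt_dich by blast
qed

lemma inj_smul: "c \<noteq> 0 \<Longrightarrow> lin smul f \<Longrightarrow> inj f \<Longrightarrow> inj (\<lambda>v. smul c (f v))"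
  using inj_lin[OF lin_smul] inj_lin smul_eq_0 by metis

lemma ruleB_gen:
  assumes ly: "lin smul y" and LNy: "LN y"
    and p1: "pair u s = 0" and p2: "pair u' s = 0"
    and l1: "lin smul z1" and i1: "inj z1" and c1: "\<And>v. y (z1 v) = z1 (y v)"
    and b1: "\<And>v. y (dact u s v) = dact u s (y v) - z1 v"
    and l2: "lin smul z2" and i2: "inj z2" and c2: "\<And>v. y (z2 v) = z2 (y v)"
    and b2: "\<And>v. y (dact u' (- s) v) = dact u' (- s) (y v) - z2 v"
  shows False
proof -
  have p2': "pair u' (- s) = 0" using p2 by (simp add: pair_neg)
  obtain l v0 where v0: "v0 \<in> weight_space smul dact l" "v0 \<noteq> 0" using exists_wv by blast
  have shl: "sh (sh l s) (- s) = l" by (simp add: sh_add sh_zero)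
  show False
  proof (rule core2[OF ly LNy v0, of "\<lambda>w. dact u' (- s) (dact u s w)"])
    fix w assume w: "w \<in> weight_space smul dact l"
    show "dact u' (- s) (dact u s w) \<in> weight_space smul dact l"
      using wD[OF p2' wD[OF p1 w]] shl by simp
    assume wn: "w \<noteq> 0"
    have h1: "hgt y w < hgt y (dact u s w)"
      by (rule hgt_raise[OF ly LNy l1 dlin[OF p1] i1 c1 b1 wn])
    then have "dact u s w \<noteq> 0" using hgt_0[of y] by auto
    then have "hgt y (dact u s w) < hgt y (dact u' (- s) (dact u s w))"
      by (rule hgt_raise[OF ly LNy l2 dlin[OF p2'] i2 c2 b2])
    then show "hgt y w < hgt y (dact u' (- s) (dact u s w))" using h1 by simp
  qed
qed

lemma ruleB:
  assumes n: "LN (tact x)" and p: "pair u s = 0" and c: "pair u x \<noteq> 0"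
    and i1: "inj (tact (x + s))" and i2: "inj (tact (x - s))"
  shows False
proof (rule ruleB_gen[OF tlin n p p])
  show "lin smul (\<lambda>v. smul (pair u x) (tact (s + x) v))" by (rule lin_smul[OF tlin])
  show "inj (\<lambda>v. smul (pair u x) (tact (s + x) v))"
    using inj_smul[OF c tlin] i1 by (simp add: add.commute)
  show "\<And>v. tact x (smul (pair u x) (tact (s + x) v)) = smul (pair u x) (tact (s + x) (tact x v))"
    using lin_scale[OF tlin] tcomm by simp
  show "\<And>v. tact x (dact u s v) = dact u s (tact x v) - smul (pair u x) (tact (s + x) v)"
    by (rule dt[OF p])
  show "lin smul (\<lambda>v. smul (pair u x) (tact (- s + x) v))" by (rule lin_smul[OF tlin])
  have e: "- s + x = x - s" by simp
  show "inj (\<lambda>v. smul (pair u x) (tact (- s + x) v))"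
    using inj_smul[OF c tlin] i2 e by simp
  show "\<And>v. tact x (smul (pair u x) (tact (- s + x) v)) = smul (pair u x) (tact (- s + x) (tact x v))"
    using lin_scale[OF tlin] tcomm by simp
  show "\<And>v. tact x (dact u (- s) v) = dact u (- s) (tact x v) - smul (pair u x) (tact (- s + x) v)"
    by (rule dt) (simp add: p pair_neg)
qed

lemma ruleG':
  assumes n: "LN (tact x)" and ip: "inj (tact p)" and pp: "pair u p = 0" and c: "pair u x \<noteq> 0"
    and i1: "inj (tact (x - p))"
  shows False
proof -
  have pp': "pair u (- p) = 0" using pp by (simp add: pair_neg)
  obtain l v0 where v0: "v0 \<in> weight_space smul dact l" "v0 \<noteq> 0" using exists_wv by blast
  have shl: "sh (sh l (- p)) p = l" by (simp add: sh_add sh_zero)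
  define z where "z = (\<lambda>v. smul (pair u x) (tact (- p + x) v))"
  have lz: "lin smul z" unfolding z_def by (rule lin_smul[OF tlin])
  have e: "- p + x = x - p" by simp
  have iz: "inj z" unfolding z_def using inj_smul[OF c tlin] i1 e by simp
  have cz: "\<And>v. tact x (z v) = z (tact x v)" unfolding z_def using lin_scale[OF tlin] tcomm by simp
  have bz: "\<And>v. tact x (dact u (- p) v) = dact u (- p) (tact x v) - z v"
    unfolding z_def by (rule dt[OF pp'])
  show False
  proof (rule core2[OF tlin n v0, of "\<lambda>w. tact p (dact u (- p) w)"])
    fix w assume w: "w \<in> weight_space smul dact l"
    show "tact p (dact u (- p) w) \<in> weight_space smul dact l"
      using wT[OF wD[OF pp' w], of p] shl by simp
    assume wn: "w \<noteq> 0"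
    have "hgt (tact x) w < hgt (tact x) (dact u (- p) w)"
      by (rule hgt_raise[OF tlin n lz dlin[OF pp'] iz cz bz wn])
    moreover have "hgt (tact x) (tact p (dact u (- p) w)) = hgt (tact x) (dact u (- p) w)"
      by (rule hgt_inj_comm[OF tlin tlin ip]) (rule tcomm)
    ultimately show "hgt (tact x) w < hgt (tact x) (tact p (dact u (- p) w))" by simp
  qed
qed

lemma ruleG:
  assumes n: "LN (tact x)" and ip: "inj (tact p)" and pp: "pair u p = 0" and c: "pair u x \<noteq> 0"
    and i1: "inj (tact (x + p))"
  shows False
proof -
  obtain l S where S: "S \<subseteq> weight_space smul dact l" "independent S" "S \<noteq> {}" "finite S"
    and mx: "\<forall>l' S'. S' \<subseteq> weight_space smul dact l' \<and> independent S' \<longrightarrow> card S' \<le> card S"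
    using maxws by blast
  obtain v0 where v0S: "v0 \<in> S" using S(3) by blast
  have v0: "v0 \<in> weight_space smul dact l" "v0 \<noteq> 0"
    using v0S S(1) S(2) dependent_zero by blast+
  have sur: "weight_space smul dact (sh l p) \<subseteq> tact p ` weight_space smul dact l"
    by (rule surj_max[OF S(1) S(2) S(4) mx tlin ip wT])
  define z where "z = (\<lambda>v. smul (pair u x) (tact (p + x) v))"
  have lz: "lin smul z" unfolding z_def by (rule lin_smul[OF tlin])
  have iz: "inj z" unfolding z_def using inj_smul[OF c tlin] i1 by (simp add: add.commute)
  have cz: "\<And>v. tact x (z v) = z (tact x v)" unfolding z_def using lin_scale[OF tlin] tcomm by simp
  have bz: "\<And>v. tact x (dact u p v) = dact u p (tact x v) - z v"
    unfolding z_def by (rule dt[OF pp])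
  define Q where "Q = (\<lambda>w. SOME w'. w' \<in> weight_space smul dact l \<and> tact p w' = dact u p w)"
  have Qp: "Q w \<in> weight_space smul dact l \<and> tact p (Q w) = dact u p w"
    if w: "w \<in> weight_space smul dact l" for w
  proof -
    have "dact u p w \<in> tact p ` weight_space smul dact l" using wD[OF pp w] sur by blast
    then have "\<exists>w'. w' \<in> weight_space smul dact l \<and> tact p w' = dact u p w" by auto
    then show ?thesis unfolding Q_def by (rule someI_ex)
  qed
  show False
  proof (rule core2[OF tlin n v0, of Q])
    fix w assume w: "w \<in> weight_space smul dact l"
    show "Q w \<in> weight_space smul dact l" using Qp[OF w] by blast
    assume wn: "w \<noteq> 0"
    have "hgt (tact x) w < hgt (tact x) (dact u p w)"
      by (rule hgt_raise[OF tlin n lz dlin[OF pp] iz cz bz wn])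
    moreover have "hgt (tact x) (tact p (Q w)) = hgt (tact x) (Q w)"
      by (rule hgt_inj_comm[OF tlin tlin ip]) (rule tcomm)
    ultimately show "hgt (tact x) w < hgt (tact x) (Q w)" using Qp[OF w] by simp
  qed
qed


lemma RG: assumes "LN (tact x)" "inj (tact p)" "gram x p \<noteq> 0" shows "LN (tact (x + p))"
  using tact_dich[of "x + p"] ruleG[OF assms(1,2) sep(1)[OF assms(3)] sep(2)[OF assms(3)]] by blast

lemma RG': assumes "LN (tact x)" "inj (tact p)" "gram x p \<noteq> 0" shows "LN (tact (x - p))"
  using tact_dich[of "x - p"] ruleG'[OF assms(1,2) sep(1)[OF assms(3)] sep(2)[OF assms(3)]] by blast

lemma RB: assumes "LN (tact x)" "gram x s \<noteq> 0" "inj (tact (x + s))" "inj (tact (x - s))" shows False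
  using ruleB[OF assms(1) sep(1)[OF assms(2)] sep(2)[OF assms(2)] assms(3,4)] .

lemma Iplus: assumes "inj (tact a)" "inj (tact b)" "gram (a + b) b \<noteq> 0" shows "inj (tact (a + b))"
proof -
  { assume n: "LN (tact (a + b))"
    have "inj (tact ((a + b) - b))" using assms(1) by simp
    then have False using ruleG'[OF n assms(2) sep(1)[OF assms(3)] sep(2)[OF assms(3)]] by blast }
  then show ?thesis using tact_dich by blast
qed

lemma Iminus: assumes "inj (tact a)" "inj (tact b)" "gram (a - b) b \<noteq> 0" shows "inj (tact (a - b))"
proof -
  { assume n: "LN (tact (a - b))"
    have "inj (tact ((a - b) + b))" using assms(1) by simp
    then have False using ruleG[OF n assms(2) sep(1)[OF assms(3)] sep(2)[OF assms(3)]] by blast }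
  then show ?thesis using tact_dich by blast
qed

lemma gram_e1: "gram (m + - x) (- x) = gram x m"
  unfolding gram_def idot_simps idot_comm[of m x] by (simp add: power2_eq_square algebra_simps)
lemma gram_e2: "gram x (m + - x) = gram x m"
  unfolding gram_def idot_simps idot_comm[of m x] by (simp add: power2_eq_square algebra_simps)
lemma gram_e3: "gram (- x) m = gram x m"
  unfolding gram_def idot_simps idot_comm[of m x] by (simp add: power2_eq_square algebra_simps)
lemma gram_e4: "gram (x + x) m = 4 * gram x m"
  unfolding gram_def idot_simps idot_comm[of m x] by (simp add: power2_eq_square algebra_simps)
lemma gram_e5: "gram (x + x + m) m = 4 * gram x m"
  unfolding gram_def idot_simps idot_comm[of m x] by (simp add: power2_eq_square algebra_simps)
lemma gram_e6: "gram (x + x - (x + x + m)) (x + x + m) = 4 * gram x m"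
  unfolding gram_def idot_simps idot_comm[of m x] by (simp add: power2_eq_square algebra_simps)
lemma gram_e7: "gram x (x + m) = gram x m"
  unfolding gram_def idot_simps idot_comm[of m x] by (simp add: power2_eq_square algebra_simps)
lemma gram_e8: "gram (- (x + x)) m = 4 * gram x m"
  unfolding gram_def idot_simps idot_comm[of m x] by (simp add: power2_eq_square algebra_simps)

lemma Neg: assumes n: "LN (tact x)" and i: "inj (tact m)" and g: "gram x m \<noteq> 0" shows "LN (tact (- x))"
proof -
  { assume i2: "inj (tact (- x))"
    have "inj (tact (m + - x))" by (rule Iplus[OF i i2]) (use gram_e1[of m x] g in simp)
    moreover have g2: "gram x (m + - x) \<noteq> 0" using gram_e2[of x m] g by simp
    moreover have "inj (tact (x + (m + - x)))" using i by simp
    ultimately have False using ruleG[OF n _ sep(1)[OF g2] sep(2)[OF g2]] by blast }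
  then show ?thesis using tact_dich by blast
qed

lemma tt_dact: "pair u r = 0 \<Longrightarrow> tt a b (dact u r v) = dact u r (tt a b v)
    - (smul (pair u a) (tact (r + a) v) + smul (pair u b) (tact (r + b) v))"
proof -
  assume pr: "pair u r = 0"
  have "tact a (dact u r v) = dact u r (tact a v) - smul (pair u a) (tact (r + a) v)" by (rule dt[OF pr])
  moreover have "tact b (dact u r v) = dact u r (tact b v) - smul (pair u b) (tact (r + b) v)" by (rule dt[OF pr])
  moreover have "dact u r (tact a v + tact b v) = dact u r (tact a v) + dact u r (tact b v)"
    by (rule lin_add[OF dlin[OF pr]])
  ultimately show ?thesis unfolding tt_def by (simp add: algebra_simps)
qed

lemma tt_sym: "tt a b = tt b a"
  unfolding tt_def by (simp add: add.commute)

lemma tt_tt: "tt a b (tt c d v) = tt c d (tt a b v)"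
  unfolding tt_def using tcomm lin_add[OF tlin] by (simp add: algebra_simps)

lemma Mix: assumes n: "LN (tact r)" and i: "inj (tact m)" and g: "gram r m \<noteq> 0" shows False
proof (cases "inj (tact (r + r))")
  case True
  have i1: "inj (tact (r + r + m))" by (rule Iplus[OF True i]) (use gram_e5[of r m] g in simp)
  have i2: "inj (tact (r + r - (r + r + m)))" by (rule Iminus[OF True i1]) (use gram_e6[of r m] g in simp)
  have e1: "r + (r + m) = r + r + m" by (simp add: vec_eq_iff)
  have e2: "r - (r + m) = r + r - (r + r + m)" by (simp add: vec_eq_iff)
  show False
  proof (rule RB[OF n])
    show "gram r (r + m) \<noteq> 0" using gram_e7[of r m] g by simp
    show "inj (tact (r + (r + m)))" by (subst e1) (rule i1)
    show "inj (tact (r - (r + m)))" by (subst e2) (rule i2)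
  qed
next
  case False
  then have nrr: "LN (tact (r + r))" using tact_dich by blast
  have gm: "gram m r \<noteq> 0" using g gram_sym by metis
  define u where "u = perpv r m"
  have pu: "pair u r = 0" unfolding u_def by (rule sep(1)[OF gm])
  have cu: "pair u m \<noteq> 0" unfolding u_def by (rule sep(2)[OF gm])
  have pun: "pair u (- r) = 0" using pu by (simp add: pair_neg)
  define a where "a = - r + m"
  define b where "b = r + m"
  have na: "LN (tact a)" unfolding a_def by (rule RG[OF Neg[OF n i g] i]) (use gram_e3[of r m] g in simp)
  have nb: "LN (tact b)" unfolding b_def by (rule RG[OF n i g])
  have g4: "gram (r + r) m \<noteq> 0" using gram_e4[of r m] g by simp
  have g8: "gram (- (r + r)) m \<noteq> 0" using gram_e8[of r m] g by simp
  have n3: "LN (tact (r + r + m))" by (rule RG[OF nrr i g4])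
  have n4: "LN (tact (- (r + r) + m))" by (rule RG[OF Neg[OF nrr i g4] i g8])
  have pua: "pair u a = pair u m" unfolding a_def by (simp only: pair_add pair_neg pu) simp
  have pub: "pair u b = pair u m" unfolding b_def by (simp add: pair_add pu)
  have ix1: "r + a = m" "r + b = r + r + m" "- r + a = - (r + r) + m" "- r + b = m"
    unfolding a_def b_def by (simp_all add: vec_eq_iff)
  define z1 where "z1 = (\<lambda>v. smul (pair u m) (tt m (r + r + m) v))"
  define z2 where "z2 = (\<lambda>v. smul (pair u m) (tt (- (r + r) + m) m v))"
  show False
  proof (rule ruleB_gen[OF tt_lin K[OF na nb] pu pu, of z1 z2])
    show "lin smul z1" unfolding z1_def by (rule lin_smul[OF tt_lin])
    show "lin smul z2" unfolding z2_def by (rule lin_smul[OF tt_lin])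
    show "inj z1" unfolding z1_def by (rule inj_smul[OF cu tt_lin J[OF i n3]])
    have "inj (tt (- (r + r) + m) m)" using J[OF i n4] tt_sym by metis
    then show "inj z2" unfolding z2_def by (rule inj_smul[OF cu tt_lin])
    show "\<And>v. tt a b (z1 v) = z1 (tt a b v)"
      unfolding z1_def using lin_scale[OF tt_lin] tt_tt by simp
    show "\<And>v. tt a b (z2 v) = z2 (tt a b v)"
      unfolding z2_def using lin_scale[OF tt_lin] tt_tt by simp
    fix v
    have "tt a b (dact u r v) = dact u r (tt a b v)
        - (smul (pair u a) (tact (r + a) v) + smul (pair u b) (tact (r + b) v))"
      by (rule tt_dact[OF pu])
    also have "smul (pair u a) (tact (r + a) v) + smul (pair u b) (tact (r + b) v) = z1 v"
      unfolding z1_def tt_def pua pub ix1 by (simp add: scale_right_distrib)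
    finally show "tt a b (dact u r v) = dact u r (tt a b v) - z1 v" .
    have "tt a b (dact u (- r) v) = dact u (- r) (tt a b v)
        - (smul (pair u a) (tact (- r + a) v) + smul (pair u b) (tact (- r + b) v))"
      by (rule tt_dact[OF pun])
    also have "smul (pair u a) (tact (- r + a) v) + smul (pair u b) (tact (- r + b) v) = z2 v"
      unfolding z2_def tt_def pua pub ix1 by (simp add: scale_right_distrib)
    finally show "tt a b (dact u (- r) v) = dact u (- r) (tt a b v) - z2 v" .
  qed
qed

lemma main:
  assumes card3: "CARD('n) \<ge> 3"
  shows "(\<forall>r::int^'n. r \<noteq> 0 \<longrightarrow> inj (tact r)) \<or>
         (\<forall>r::int^'n. r \<noteq> 0 \<longrightarrow> (\<forall>v. \<exists>k::nat. (tact r ^^ k) v = 0))"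
proof (rule ccontr)
  assume "\<not> ?thesis"
  then obtain r m :: "int^'n" where r: "r \<noteq> 0" "\<not> inj (tact r)" and m: "m \<noteq> 0" "\<not> LN (tact m)"
    unfolding LN_def by blast
  have nr: "LN (tact r)" using r tact_dich by blast
  have im: "inj (tact m)" using m tact_dich by blast
  obtain j0 where j0: "r$j0 \<noteq> 0" using r(1) by (metis vec_eq_iff zero_index)
  obtain j1 where j1: "m$j1 \<noteq> 0" using m(1) by (metis vec_eq_iff zero_index)
  obtain i :: 'n where i: "i \<noteq> j0" "i \<noteq> j1"
  proof -
    have "\<not> (UNIV :: 'n set) \<subseteq> {j0, j1}"
    proof
      assume "(UNIV :: 'n set) \<subseteq> {j0, j1}"
      then have "CARD('n) \<le> card {j0, j1}" by (rule card_mono[rotated]) simp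
      also have "\<dots> \<le> 2" by (simp add: card_insert_le_m1)
      finally show False using card3 by simp
    qed
    then show ?thesis using that by blast
  qed
  define w where "w = (axis i 1 :: int^'n)"
  have gr: "gram w r \<noteq> 0" unfolding w_def by (rule gram_axis_pos[OF j0]) (use i in simp)
  have gm: "gram w m \<noteq> 0" unfolding w_def by (rule gram_axis_pos[OF j1]) (use i in simp)
  show False
  proof (cases "inj (tact w)")
    case True
    show False by (rule Mix[OF nr True]) (use gr gram_sym in metis)
  next
    case False
    then have "LN (tact w)" using tact_dich by blast
    then show False by (rule Mix[OF _ im gm])
  qed
qed

end

theorem proposition3p3:
  fixes smul :: "complex \<Rightarrow> 'v::ab_group_add \<Rightarrow> 'v"
    and dact :: "complex^'n::finite \<Rightarrow> int^'n \<Rightarrow> 'v \<Rightarrow> 'v"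
    and tact :: "int^'n \<Rightarrow> 'v \<Rightarrow> 'v"
  assumes "CARD('n) \<ge> 3"
    and "is_G_module smul dact tact"
    and "is_irreducible smul dact tact"
    and "is_cuspidal smul dact"
  shows "(\<forall>r::int^'n. r \<noteq> 0 \<longrightarrow> inj (tact r)) \<or>
         (\<forall>r::int^'n. r \<noteq> 0 \<longrightarrow> (\<forall>v. \<exists>k::nat. (tact r ^^ k) v = 0))"
proof -
  have vs: "vector_space smul" using assms(2) unfolding is_G_module_def by blast
  interpret G: gm smul dact tact
    by (rule gm.intro[OF vs]) (unfold_locales, use assms in auto)
  show ?thesis by (rule G.main[OF assms(1)])
qed

end
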